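(* Let $F=\sum_{g\ge 0}\lambda^{2g-2}F_g(p_1,p_2,\dots;s,u,v)$ be the dessin free energy (defined in the context), and define the genus zero one-point function $$G_{0,1}(x)=\sum_{m\ge 1} m\,\frac{\partial F_0}{\partial p_m}\Big|_{p_k=0,\,k\ge1}\, x^{-m-1}.$$ Then $G_{0,1}$ satisfies $G_{0,1}(x)=\frac{suv}{x^2}+\frac{s(u+v)}{x}G_{0,1}(x)+sG_{0,1}(x)^2$, and $$G_{0,1}(x)=\frac{1}{2s}\Big(1-\frac{s(u+v)}{x}-\sqrt{1-\frac{2s(u+v)}{x}+\frac{s^2(u-v)^2}{x^2}}\Big)=\sum_{n\ge1}\frac{s^n}{x^{n+1}}\sum_{k=1}^n\frac1n\binom{n}{k}\binom{n}{k-1}u^{n+1-k}v^k,$$ where the square root is the formal power series in $x^{-1}$ with constant term $1$. Equivalently, the coefficient of $x^{-n-1}$ is $s^n u^{n+1}N_n(v/u)$, where $N_n(q)=\sum_{k=1}^n N_{n,k}q^k$ is the $n$-th Narayana polynomial, $N_{n,k}=\frac1n\binom nk\binom n{k-1}$.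
   Context: Let $s,u,v$ be parameters and $\lambda$ a genus-tracking parameter. For $n\ge0$ define the dessin Virasoro operators $$L_n=-\frac{n+1}{s}\frac{\partial}{\partial p_{n+1}}+(u+v)n\frac{\partial}{\partial p_n}+\sum_{j\ge1}p_j(n+j)\frac{\partial}{\partial p_{n+j}}+\lambda^2\sum_{i+j=n,\ i,j\ge1}ij\frac{\partial^2}{\partial p_i\partial p_j}+\delta_{n,0}\,uv\,\lambda^{-2}.$$ The dessin free energy $F=\sum_{g\ge0}\lambda^{2g-2}F_g$ (the logarithm of the Kazarian–Zograf generating series of Grothendieck's dessins d'enfants, with $F_g$ formal power series in $p_1,p_2,\dots$ vanishing at $p=0$) is characterized by $L_n e^{F}=0$ for all $n\ge0$. In genus zero this means: for all $n\ge0$, $(u+v)n\,\partial_{p_n}F_0+\sum_{j\ge1}(p_j-\delta_{j,1}/s)(n+j)\partial_{p_{n+j}}F_0+\sum_{i+j=n}ij\,\partial_{p_i}F_0\,\partial_{p_j}F_0+\delta_{n,0}uv=0$. *)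

theory Defs
  imports "HOL-Library.Multiset" "HOL-Computational_Algebra.Formal_Power_Series"
begin

(* A formal power series in the variables p_1, p_2, ... is given by its coefficient
   function on monomials.  The monomial  prod_i p_i^(count M i)  is encoded by the
   multiset M of (positive) variable indices. *)
type_synonym 'a pseries = "nat multiset \<Rightarrow> 'a"

definition pos_monomial :: "nat multiset \<Rightarrow> bool" where
  "pos_monomial M \<longleftrightarrow> (\<forall>i\<in>#M. 0 < i)"

definition pdiff :: "'a::semiring_1 pseries \<Rightarrow> nat \<Rightarrow> 'a pseries" where
  "pdiff F i = (\<lambda>M. of_nat (count M i + 1) * F (add_mset i M))"

definition pmul_var :: "nat \<Rightarrow> 'a::zero pseries \<Rightarrow> 'a pseries" where
  "pmul_var j G = (\<lambda>M. if j \<in># M then G (M - {#j#}) else 0)"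

definition ps_mult :: "'a::comm_semiring_1 pseries \<Rightarrow> 'a pseries \<Rightarrow> 'a pseries" where
  "ps_mult A B = (\<lambda>M. \<Sum>N\<in>{N. N \<subseteq># M}. A N * B (M - N))"

definition ps_const :: "'a::zero \<Rightarrow> 'a pseries" where
  "ps_const c = (\<lambda>M. if M = {#} then c else 0)"

(* The genus zero Virasoro equation number n, as a coefficient function:
   (u+v) n dF/dp_n + sum_{j>=1} (p_j - delta_{j,1}/s)(n+j) dF/dp_{n+j}
   + sum_{i+j=n, i,j>=1} i j dF/dp_i dF/dp_j + delta_{n,0} u v *)
definition genus0_eq :: "'a::field \<Rightarrow> 'a \<Rightarrow> 'a \<Rightarrow> 'a pseries \<Rightarrow> nat \<Rightarrow> 'a pseries" where
  "genus0_eq s u v F n = (\<lambda>M.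
      (u + v) * of_nat n * pdiff F n M
    + (\<Sum>j\<in>set_mset M. of_nat (n + j) * pmul_var j (pdiff F (n + j)) M)
    - of_nat (n + 1) / s * pdiff F (n + 1) M
    + (\<Sum>i\<in>{1..<n}. of_nat (i * (n - i)) * ps_mult (pdiff F i) (pdiff F (n - i)) M)
    + (if n = 0 then ps_const (u * v) M else 0))"

definition dessin_genus0 :: "'a::field \<Rightarrow> 'a \<Rightarrow> 'a \<Rightarrow> 'a pseries \<Rightarrow> bool" where
  "dessin_genus0 s u v F \<longleftrightarrow>
     F {#} = 0 \<and> (\<forall>n M. pos_monomial M \<longrightarrow> genus0_eq s u v F n M = 0)"

(* genus zero one-point function, as a formal power series in y = x^{-1}:
   G_{0,1} = sum_{m>=1} m dF_0/dp_m|_{p=0} y^{m+1} *)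
definition G01 :: "'a::semiring_1 pseries \<Rightarrow> 'a fps" where
  "G01 F = Abs_fps (\<lambda>k. if k < 2 then 0 else of_nat (k - 1) * pdiff F (k - 1) {#})"

(* Narayana numbers N_{n,k} = (1/n) C(n,k) C(n,k-1) (an integer) and polynomials *)
definition narayana :: "nat \<Rightarrow> nat \<Rightarrow> nat" where
  "narayana n k = ((n choose k) * (n choose (k - 1))) div n"

definition narayana_poly :: "nat \<Rightarrow> 'a::semiring_1 \<Rightarrow> 'a" where
  "narayana_poly n q = (\<Sum>k=1..n. of_nat (narayana n k) * q ^ k)"

end

theory Submission
  imports Defs
begin


definition nc :: "nat \<Rightarrow> nat \<Rightarrow> 'a::field_char_0" where
  "nc n k = (if 1 \<le> k then of_nat ((n choose k) * (n choose (k - 1))) / of_nat n else 0)"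

lemma nc_0 [simp]: "nc n 0 = 0" by (simp add: nc_def)

lemma nc_big: "n < k \<Longrightarrow> nc n k = 0" by (simp add: nc_def)

lemma absorb1: "n * ((n - 1) choose k) = (n - k) * (n choose k)"
  using binomial_absorb_comp by metis

lemma absorb2: "n * ((n - 1) choose j) = Suc j * (n choose Suc j)"
  using binomial_absorption[of j n] by simp

lemma aux_eq: "(n::nat) \<noteq> 0 \<Longrightarrow> m \<noteq> 0 \<Longrightarrow> n * n * A = B * C \<Longrightarrow>
   of_nat n * of_nat m * (of_nat A / of_nat m) = (of_nat B::'a::field_char_0) * (of_nat C / of_nat n)"
proof -
  assume h: "n \<noteq> 0" "m \<noteq> 0" "n * n * A = B * C"
  have "(of_nat n * of_nat n * of_nat A :: 'a) = of_nat B * of_nat C"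
    using h(3) by (metis of_nat_mult)
  then show ?thesis using h(1,2) by (simp add: field_simps)
qed

lemma R1: "of_nat n * of_nat (n - 1) * (nc (n - 1) k :: 'a::field_char_0)
          = of_nat (n - k) * of_nat (n + 1 - k) * nc n k"
proof (cases "1 \<le> k \<and> k < n")
  case True
  then obtain j where k: "k = Suc j" by (cases k) auto
  have n2: "n \<ge> 2" using True by auto
  have e1: "n * ((n - 1) choose k) = (n - k) * (n choose k)" by (rule absorb1)
  have e2: "n * ((n - 1) choose j) = (n + 1 - k) * (n choose j)"
    using absorb1[of n j] True k by simp
  have "n * n * (((n - 1) choose k) * ((n - 1) choose j))
      = ((n - k) * (n + 1 - k)) * ((n choose k) * (n choose j))"
    using e1 e2 by (metis mult.assoc mult.commute mult.left_commute)
  from aux_eq[of n "n - 1", OF _ _ this, where 'a='a] n2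
  have X: "of_nat n * of_nat (n - 1) * (of_nat (((n - 1) choose k) * ((n - 1) choose j)) / of_nat (n - 1))
     = (of_nat ((n - k) * (n + 1 - k)) :: 'a) * (of_nat ((n choose k) * (n choose j)) / of_nat n)" by simp
  have a: "nc n k = (of_nat ((n choose k) * (n choose j)) / of_nat n :: 'a)" by (simp add: nc_def k)
  have b: "nc (n - 1) k = (of_nat (((n - 1) choose k) * ((n - 1) choose j)) / of_nat (n - 1) :: 'a)" by (simp add: nc_def k)
  show ?thesis unfolding a b using X by (simp only: of_nat_mult)
next
  case False
  then consider "k = 0" | "n \<le> k" by linarith
  then show ?thesis
  proof cases
    case 1 then show ?thesis by simp
  next
    case 2
    then have "nc (n - 1) k = (0::'a)"
      by (cases "n = 0") (auto simp: nc_def intro!: nc_big)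
    then show ?thesis using 2 by simp
  qed
qed

lemma R2: "of_nat n * of_nat (n - 1) * (nc (n - 1) (k - 1) :: 'a::field_char_0)
          = of_nat k * of_nat (k - 1) * nc n k"
proof (cases "2 \<le> k \<and> k \<le> n")
  case True
  then obtain j where k: "k = Suc (Suc j)" by (metis add_2_eq_Suc le_Suc_ex)
  have n2: "n \<ge> 2" using True by auto
  have e1: "n * ((n - 1) choose Suc j) = k * (n choose k)" using absorb2[of n "Suc j"] k by simp
  have e2: "n * ((n - 1) choose j) = (k - 1) * (n choose Suc j)"
    using absorb2[of n j] k by simp
  have "n * n * (((n - 1) choose Suc j) * ((n - 1) choose j))
      = (k * (k - 1)) * ((n choose k) * (n choose Suc j))"
    using e1 e2 by (metis mult.assoc mult.commute mult.left_commute)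
  from aux_eq[of n "n - 1", OF _ _ this, where 'a='a] n2
  have X: "of_nat n * of_nat (n - 1) * (of_nat (((n - 1) choose Suc j) * ((n - 1) choose j)) / of_nat (n - 1))
     = (of_nat (k * (k - 1)) :: 'a) * (of_nat ((n choose k) * (n choose Suc j)) / of_nat n)" by simp
  have a: "nc n k = (of_nat ((n choose k) * (n choose Suc j)) / of_nat n :: 'a)" by (simp add: nc_def k)
  have b: "nc (n - 1) (k - 1) = (of_nat (((n - 1) choose Suc j) * ((n - 1) choose j)) / of_nat (n - 1) :: 'a)" by (simp add: nc_def k)
  show ?thesis unfolding a b using X by (simp only: of_nat_mult)
next
  case False
  then consider "k = 0" | "k = 1" | "n < k" by linarith
  then show ?thesis
  proof cases
    case 3
    then have "nc (n - 1) (k - 1) = (0::'a)"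
      by (cases "n = 0") (auto simp: nc_def intro!: nc_big)
    then show ?thesis using 3 by (simp add: nc_big)
  qed auto
qed


lemma key_rat0:
  fixes N K X a b :: "'a::field_char_0"
  assumes "N \<noteq> 0" "a \<noteq> 0" "b \<noteq> 0" and ab: "a = N - 1" "b = N - 2"
  shows "(N + 1) * X = (2*N - 1) * ((N - K) * (N + 1 - K) / (N * a) * X + K * (K - 1) / (N * a) * X)
     - b * ((N - 1 - K) * (N - K) / (a * b) * ((N - K) * (N + 1 - K) / (N * a) * X)
          - 2 * (K * (K - 1) / (a * b) * ((N - K) * (N + 1 - K) / (N * a) * X))
          + (K - 1) * (K - 2) / (a * b) * (K * (K - 1) / (N * a) * X))"
proof -
  have e: "(N + 1) * (N * a * a) = (2*N - 1) * ((N - K) * (N + 1 - K) + K * (K - 1)) * a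
     - ((N - 1 - K) * (N - K) * ((N - K) * (N + 1 - K)) - 2 * (K * (K - 1) * ((N - K) * (N + 1 - K)))
        + (K - 1) * (K - 2) * (K * (K - 1)))"
    unfolding ab by algebra
  have "(2*N - 1) * ((N - K) * (N + 1 - K) / (N * a) * X + K * (K - 1) / (N * a) * X)
     - b * ((N - 1 - K) * (N - K) / (a * b) * ((N - K) * (N + 1 - K) / (N * a) * X)
          - 2 * (K * (K - 1) / (a * b) * ((N - K) * (N + 1 - K) / (N * a) * X))
          + (K - 1) * (K - 2) / (a * b) * (K * (K - 1) / (N * a) * X))
     = X / (N * a * a) * ((2*N - 1) * ((N - K) * (N + 1 - K) + K * (K - 1)) * a
     - ((N - 1 - K) * (N - K) * ((N - K) * (N + 1 - K)) - 2 * (K * (K - 1) * ((N - K) * (N + 1 - K)))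
        + (K - 1) * (K - 2) * (K * (K - 1))))"
    using assms(1-3) by (simp add: field_simps)
  also have "\<dots> = (N + 1) * X" unfolding e[symmetric] using assms(1-3) by simp
  finally show ?thesis by simp
qed

lemma solve_lin: "(D::'a::field) \<noteq> 0 \<Longrightarrow> D * y = P * X \<Longrightarrow> y = P / D * X"
  by (metis nonzero_mult_div_cancel_left times_divide_eq_left times_divide_eq_right)

lemma nc_rec_main:
  assumes n3: "n \<ge> 3" and k1: "1 \<le> k" and kn: "k \<le> n"
  shows "of_nat (n+1) * (nc n k :: 'a::field_char_0) = of_nat (2*n-1) * (nc (n-1) k + nc (n-1) (k-1))
     - of_nat (n-2) * (nc (n-2) k - 2 * nc (n-2) (k-1) + nc (n-2) (k-2))"
proof -
  define N :: 'a where "N = of_nat n"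
  define K :: 'a where "K = of_nat k"
  define X :: 'a where "X = nc n k"
  have "(of_nat n::'a) \<noteq> of_nat 2" using n3 by (simp only: of_nat_eq_iff)
  then have N0: "N \<noteq> 0" "N - 1 \<noteq> 0" "N - 2 \<noteq> 0" using n3 by (auto simp: N_def)
  have c1: "(of_nat (n - 1) :: 'a) = N - 1" "(of_nat (n - 2) :: 'a) = N - 2"
     "(of_nat (n - k) :: 'a) = N - K" "(of_nat (n + 1 - k) :: 'a) = N + 1 - K"
     "(of_nat (k - 1) :: 'a) = K - 1" "(of_nat (2*n - 1) :: 'a) = 2*N - 1"
     "(of_nat (n+1) :: 'a) = N + 1"
    using n3 k1 kn by (auto simp: N_def K_def of_nat_diff)
  have c2: "(of_nat (n - 1 - k) :: 'a) * of_nat (n - k) = (N - 1 - K) * (N - K)"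
  proof (cases "k = n")
    case False then show ?thesis using kn n3 by (auto simp: N_def K_def of_nat_diff)
  qed (simp add: N_def K_def)
  have c3: "(of_nat (k - 1) :: 'a) * of_nat (k - 1 - 1) = (K - 1) * (K - 2)"
  proof (cases "k = 1")
    case False then show ?thesis using k1 by (auto simp: N_def K_def of_nat_diff)
  qed (simp add: N_def K_def)
  have nn: "n - 1 - 1 = n - 2" by simp
  have kk: "k - 1 - 1 = k - 2" by simp
  have nn2: "n - 1 + 1 = n" using n3 by simp
  have c4: "(of_nat (n - 1 - 1) :: 'a) = N - 2" using c1 nn by simp
  have r1: "N * (N - 1) * nc (n-1) k = (N - K) * (N + 1 - K) * X"
    using R1[of n k, where 'a='a] unfolding c1 N_def X_def .
  have r2: "N * (N - 1) * nc (n-1) (k-1) = K * (K - 1) * X"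
    using R2[of n k, where 'a='a] unfolding c1 N_def K_def X_def .
  have r3: "(N - 1) * (N - 2) * nc (n-2) k = (N - 1 - K) * (N - K) * nc (n-1) k"
    using R1[of "n-1" k, where 'a='a] unfolding nn2 unfolding c2 unfolding nn c1 c4 .
  have r4: "(N - 1) * (N - 2) * nc (n-2) (k-1) = K * (K - 1) * nc (n-1) k"
    using R2[of "n-1" k, where 'a='a] unfolding c1 c4 nn K_def .
  have r5: "(N - 1) * (N - 2) * nc (n-2) (k-2) = (K - 1) * (K - 2) * nc (n-1) (k-1)"
    using R2[of "n-1" "k-1", where 'a='a] unfolding c3 unfolding nn kk c1 c4 .
  have A1: "nc (n-1) k = (N - K) * (N + 1 - K) / (N * (N - 1)) * X"
    by (rule solve_lin[OF _ r1]) (use N0 in simp)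
  have A2: "nc (n-1) (k-1) = K * (K - 1) / (N * (N - 1)) * X"
    by (rule solve_lin[OF _ r2]) (use N0 in simp)
  have B1: "nc (n-2) k = (N - 1 - K) * (N - K) / ((N - 1) * (N - 2)) * nc (n-1) k"
    by (rule solve_lin[OF _ r3]) (use N0 in simp)
  have B2: "nc (n-2) (k-1) = K * (K - 1) / ((N - 1) * (N - 2)) * nc (n-1) k"
    by (rule solve_lin[OF _ r4]) (use N0 in simp)
  have B3: "nc (n-2) (k-2) = (K - 1) * (K - 2) / ((N - 1) * (N - 2)) * nc (n-1) (k-1)"
    by (rule solve_lin[OF _ r5]) (use N0 in simp)
  show ?thesis
    unfolding B1 B2 B3 unfolding A1 A2 c1 X_def[symmetric]
    by (rule key_rat0[of N "N - 1" "N - 2"]) (use N0 in auto)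
qed


lemma nc_nz: "nc m j \<noteq> 0 \<Longrightarrow> 1 \<le> j \<and> j \<le> m"
  by (auto simp: nc_def split: if_splits dest: nc_big)

lemma nc_rec:
  assumes n2: "n \<ge> 2"
  shows "of_nat (n+1) * (nc n k :: 'a::field_char_0) = of_nat (2*n-1) * (nc (n-1) k + nc (n-1) (k-1))
     - of_nat (n-2) * (nc (n-2) k - 2 * nc (n-2) (k-1) + nc (n-2) (k-2))"
proof (cases "n = 2")
  case True
  have a: "nc 2 1 = (1::'a)" "nc 2 2 = (1::'a)" "nc 1 1 = (1::'a)" by (simp_all add: nc_def)
  show ?thesis
  proof (cases "k \<le> 2")
    case True
    then consider "k = 0" | "k = 1" | "k = 2" by linarith
    then show ?thesis using \<open>n = 2\<close> a by cases (simp_all add: nc_big)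
  next
    case False then show ?thesis using \<open>n = 2\<close> by (simp add: nc_big)
  qed
next
  case False
  then have n3: "n \<ge> 3" using n2 by simp
  consider "k = 0" | "1 \<le> k \<and> k \<le> n" | "n < k" by linarith
  then show ?thesis
  proof cases
    case 2 then show ?thesis using nc_rec_main[OF n3] by blast
  next
    case 3 then show ?thesis using n3 by (simp add: nc_big)
  qed simp
qed


definition cu :: "'a::field_char_0 \<Rightarrow> nat \<Rightarrow> nat \<Rightarrow> 'a" where
  "cu u m k = nc m k * u ^ (m + 1 - k)"

definition PP :: "'a::field_char_0 \<Rightarrow> 'a \<Rightarrow> nat \<Rightarrow> 'a" where
  "PP u v m = (\<Sum>k\<le>m+1. cu u m k * v ^ k)"

lemma cu_gen:
  fixes u :: "'a::field_char_0"
  assumes h: "nc m j \<noteq> (0::'a) \<Longrightarrow> m + 1 - j + i = e"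
  shows "cu u m j * u ^ i = nc m j * u ^ e"
proof (cases "nc m j = (0::'a)")
  case True then show ?thesis by (simp add: cu_def)
next
  case False
  have "e = m + 1 - j + i" using h[OF False] by simp
  then show ?thesis by (simp add: cu_def power_add mult.assoc)
qed

lemma cu_0 [simp]: "cu u m 0 = 0" by (simp add: cu_def)

lemma cu_big: "m < k \<Longrightarrow> cu u m k = 0" by (simp add: cu_def nc_big)

lemma cu_rec:
  assumes n2: "n \<ge> 2"
  shows "of_nat (n+1) * cu u n k = of_nat (2*n-1) * (u * cu u (n-1) k + cu u (n-1) (k-1))
     - of_nat (n-2) * (u^2 * cu u (n-2) k - 2 * u * cu u (n-2) (k-1) + cu u (n-2) (k-1-1))"
proof -
  define E where "E = u ^ (n + 1 - k)"
  have t0: "cu u n k = nc n k * E" by (simp add: cu_def E_def)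
  have t1: "u * cu u (n-1) k = nc (n-1) k * E"
  proof -
    have "cu u (n-1) (k) * u ^ 1 = nc (n-1) (k) * u ^ (n + 1 - k)"
      proof (rule cu_gen)
        assume h: "nc (n-1) (k) \<noteq> 0"
        show "n-1 + 1 - (k) + 1 = n + 1 - k" using nc_nz[OF h] n2 by arith
      qed
    then show ?thesis by (simp add: E_def mult.commute)
  qed
  have t2: "cu u (n-1) (k-1) = nc (n-1) (k-1) * E"
  proof -
    have "cu u (n-1) (k-1) * u ^ 0 = nc (n-1) (k-1) * u ^ (n + 1 - k)"
      proof (rule cu_gen)
        assume h: "nc (n-1) (k-1) \<noteq> 0"
        show "n-1 + 1 - (k-1) + 0 = n + 1 - k" using nc_nz[OF h] n2 by arith
      qed
    then show ?thesis by (simp add: E_def )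
  qed
  have t3: "u^2 * cu u (n-2) k = nc (n-2) k * E"
  proof -
    have "cu u (n-2) (k) * u ^ 2 = nc (n-2) (k) * u ^ (n + 1 - k)"
      proof (rule cu_gen)
        assume h: "nc (n-2) (k) \<noteq> 0"
        show "n-2 + 1 - (k) + 2 = n + 1 - k" using nc_nz[OF h] n2 by arith
      qed
    then show ?thesis by (simp add: E_def mult.commute)
  qed
  have t4: "2 * u * cu u (n-2) (k-1) = 2 * (nc (n-2) (k-1) * E)"
  proof -
    have "cu u (n-2) (k-1) * u ^ 1 = nc (n-2) (k-1) * u ^ (n + 1 - k)"
      proof (rule cu_gen)
        assume h: "nc (n-2) (k-1) \<noteq> 0"
        show "n-2 + 1 - (k-1) + 1 = n + 1 - k" using nc_nz[OF h] n2 by arith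
      qed
    then show ?thesis by (simp add: E_def mult.commute mult.assoc)
  qed
  have t5: "cu u (n-2) (k-1-1) = nc (n-2) (k-1-1) * E"
  proof -
    have "cu u (n-2) (k-1-1) * u ^ 0 = nc (n-2) (k-1-1) * u ^ (n + 1 - k)"
      proof (rule cu_gen)
        assume h: "nc (n-2) (k-1-1) \<noteq> 0"
        show "n-2 + 1 - (k-1-1) + 0 = n + 1 - k" using nc_nz[OF h] n2 by arith
      qed
    then show ?thesis by (simp add: E_def)
  qed
  have kk: "k - 1 - 1 = k - 2" by simp
  have "of_nat (n+1) * nc n k * E = (of_nat (2*n-1) * (nc (n-1) k + nc (n-1) (k-1))
     - of_nat (n-2) * (nc (n-2) k - 2 * nc (n-2) (k-1) + nc (n-2) (k-2))) * E"
    using nc_rec[OF n2, of k, where 'a='a] by simp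
  then show ?thesis unfolding t0 t1 t2 t3 t4 t5 unfolding kk by (simp add: algebra_simps)
qed


lemma sum_ext: "(\<And>k. N < k \<Longrightarrow> f k = 0) \<Longrightarrow> N \<le> M \<Longrightarrow>
   (\<Sum>k\<le>N. f k * (v::'a::field) ^ k) = (\<Sum>k\<le>M. f k * v ^ k)"
  by (intro sum.mono_neutral_left) auto

lemma sum_shift: "f 0 = 0 \<Longrightarrow> v * (\<Sum>k\<le>N. f k * (v::'a::field) ^ k) = (\<Sum>k\<le>Suc N. f (k - 1) * v ^ k)"
  unfolding sum.atMost_Suc_shift by (simp add: sum_distrib_left algebra_simps)

lemma P_rec:
  assumes n2: "n \<ge> 2"
  shows "of_nat (n+1) * PP u v n = of_nat (2*n-1) * (u + v) * PP u v (n-1)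
     - of_nat (n-2) * (u - v)^2 * PP u v (n-2)"
proof -
  have h1: "PP u v (n-1) = (\<Sum>k\<le>n+1. cu u (n-1) k * v^k)"
    unfolding PP_def by (rule sum_ext) (auto simp: cu_big)
  have h2: "v * PP u v (n-1) = (\<Sum>k\<le>n+1. cu u (n-1) (k-1) * v^k)"
    unfolding PP_def using sum_shift[of "cu u (n-1)" v n] n2 by simp
  have h3: "PP u v (n-2) = (\<Sum>k\<le>n+1. cu u (n-2) k * v^k)"
    unfolding PP_def by (rule sum_ext) (auto simp: cu_big)
  have h4a: "v * PP u v (n-2) = (\<Sum>k\<le>n. cu u (n-2) (k-1) * v^k)"
  proof -
    have e1: "n - 2 + 1 = n - 1" "Suc (n - 1) = n" using n2 by auto
    have "v * (\<Sum>k\<le>n-1. cu u (n-2) k * v^k) = (\<Sum>k\<le>Suc (n-1). cu u (n-2) (k-1) * v^k)"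
      by (rule sum_shift) simp
    then show ?thesis unfolding PP_def e1 .
  qed
  have h4: "v * PP u v (n-2) = (\<Sum>k\<le>n+1. cu u (n-2) (k-1) * v^k)"
    unfolding h4a by (rule sum_ext) (use n2 in \<open>auto intro!: cu_big\<close>)
  have h5: "v * (v * PP u v (n-2)) = (\<Sum>k\<le>n+1. cu u (n-2) (k-1-1) * v^k)"
    unfolding h4a using sum_shift[of "\<lambda>k. cu u (n-2) (k-1)" v n] by simp
  have "of_nat (2*n-1) * (u + v) * PP u v (n-1) - of_nat (n-2) * (u - v)^2 * PP u v (n-2)
     = of_nat (2*n-1) * (u * PP u v (n-1) + v * PP u v (n-1))
       - of_nat (n-2) * (u^2 * PP u v (n-2) - 2 * u * (v * PP u v (n-2)) + v * (v * PP u v (n-2)))"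
    by (simp add: algebra_simps power2_eq_square)
  also have "\<dots> = of_nat (2*n-1) * (u * (\<Sum>k\<le>n+1. cu u (n-1) k * v^k) + (\<Sum>k\<le>n+1. cu u (n-1) (k-1) * v^k))
       - of_nat (n-2) * (u^2 * (\<Sum>k\<le>n+1. cu u (n-2) k * v^k) - 2 * u * (\<Sum>k\<le>n+1. cu u (n-2) (k-1) * v^k)
          + (\<Sum>k\<le>n+1. cu u (n-2) (k-1-1) * v^k))"
    unfolding h5 unfolding h2 h4 unfolding h1 h3 ..
  also have "\<dots> = (\<Sum>k\<le>n+1. (of_nat (2*n-1) * (u * cu u (n-1) k + cu u (n-1) (k-1))
     - of_nat (n-2) * (u^2 * cu u (n-2) k - 2 * u * cu u (n-2) (k-1) + cu u (n-2) (k-1-1))) * v^k)"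
    by (simp add: algebra_simps sum.distrib sum_subtractf sum_distrib_left)
  also have "\<dots> = (\<Sum>k\<le>n+1. of_nat (n+1) * cu u n k * v^k)"
    by (rule sum.cong[OF refl]) (simp only: cu_rec[OF n2])
  also have "\<dots> = of_nat (n+1) * PP u v n"
    unfolding PP_def by (simp only: sum_distrib_left mult.assoc)
  finally show ?thesis by simp
qed



lemma submset_empty: "{N. N \<subseteq># {#}} = {{#}}" by auto

lemma ps_const_empty: "ps_const c {#} = c" by (simp add: ps_const_def)

lemma vir_empty:
  fixes s u v :: "'a::field_char_0" and F0 :: "'a pseries"
  assumes s0: "s \<noteq> 0" and D: "dessin_genus0 s u v F0"
  shows "of_nat (n+1) * F0 {#n+1#} = s * ((u+v) * (of_nat n * F0 {#n#})
          + (\<Sum>i\<in>{1..<n}. (of_nat i * F0 {#i#}) * (of_nat (n-i) * F0 {#n-i#}))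
          + (if n = 0 then u * v else 0))"
proof -
  have "genus0_eq s u v F0 n {#} = 0" using D by (simp add: dessin_genus0_def pos_monomial_def)
  then have e: "(u + v) * of_nat n * F0 {#n#} - of_nat (n + 1) / s * F0 {#n+1#}
     + (\<Sum>i\<in>{1..<n}. of_nat (i * (n - i)) * (F0 {#i#} * F0 {#n-i#}))
     + (if n = 0 then u * v else 0) = 0"
    unfolding genus0_eq_def pdiff_def ps_mult_def submset_empty ps_const_empty
    by (simp del: of_nat_diff of_nat_mult of_nat_add add: add_ac)
  have sm: "(\<Sum>i\<in>{1..<n}. of_nat (i * (n - i)) * (F0 {#i#} * F0 {#n-i#}))
      = (\<Sum>i\<in>{1..<n}. (of_nat i * F0 {#i#}) * (of_nat (n-i) * F0 {#n-i#}))"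
    by (rule sum.cong) (simp_all add: algebra_simps)
  from e[unfolded sm] s0 show ?thesis
    by (simp add: field_simps)
qed


lemma conv_sum:
  fixes g :: "nat \<Rightarrow> 'a::field_char_0"
  shows "(\<Sum>i=0..n+2. (if i < 2 then 0 else g (i-1)) * (if n + 2 - i < 2 then 0 else g (n + 2 - i - 1)))
       = (\<Sum>i\<in>{1..<n}. g i * g (n-i))"
proof -
  have "(\<Sum>i=0..n+2. (if i < 2 then 0 else g (i-1)) * (if n + 2 - i < 2 then 0 else g (n + 2 - i - 1)))
      = (\<Sum>i\<in>{2..n}. (if i < 2 then 0 else g (i-1)) * (if n + 2 - i < 2 then 0 else g (n + 2 - i - 1)))"
    by (rule sum.mono_neutral_right) auto
  also have "\<dots> = (\<Sum>i\<in>{2..n}. g (i-1) * g (n + 1 - i))"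
    by (rule sum.cong) auto
  also have "\<dots> = (\<Sum>i\<in>{1..<n}. g i * g (n-i))"
    by (rule sum.reindex_bij_witness[of _ "\<lambda>i. i + 1" "\<lambda>i. i - 1"]) auto
  finally show ?thesis .
qed

lemma quad_fps:
  fixes g :: "nat \<Rightarrow> 'a::field_char_0"
  assumes g0: "g 0 = 0"
    and rec: "\<And>n. g (n+1) = s * ((u+v) * g n + (\<Sum>i\<in>{1..<n}. g i * g (n-i)) + (if n = 0 then u * v else 0))"
  defines "G \<equiv> Abs_fps (\<lambda>k. if k < 2 then 0 else g (k-1))"
  shows "G = fps_const (s*u*v) * fps_X^2 + fps_const (s*(u+v)) * fps_X * G + fps_const s * G^2"
proof (rule fps_ext)
  fix k
  show "fps_nth G k = fps_nth (fps_const (s*u*v) * fps_X^2 + fps_const (s*(u+v)) * fps_X * G + fps_const s * G^2) k"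
  proof (cases "k < 2")
    case True
    have sq: "fps_nth (G^2) k = 0"
      using True unfolding power2_eq_square fps_mult_nth by (intro sum.neutral) (auto simp: G_def)
    have x: "fps_nth (fps_const (s*(u+v)) * fps_X * G) k = 0"
      using True by (auto simp: G_def mult.assoc)
    show ?thesis unfolding fps_add_nth x fps_mult_left_const_nth sq using True
      by (simp add: G_def)
  next
    case False
    then obtain n where k: "k = n + 2" by (metis add.commute le_Suc_ex not_less)
    have "fps_nth (G^2) k = (\<Sum>i=0..n+2. (if i < 2 then 0 else g (i-1)) * (if n + 2 - i < 2 then 0 else g (n + 2 - i - 1)))"
      by (simp only: G_def fps_mult_nth power2_eq_square k fps_nth_Abs_fps)
    also have "\<dots> = (\<Sum>i\<in>{1..<n}. g i * g (n-i))" by (rule conv_sum)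
    finally have c: "fps_nth (G^2) k = (\<Sum>i\<in>{1..<n}. g i * g (n-i))" .
    have x: "fps_nth (fps_const (s*(u+v)) * fps_X * G) k = s * (u+v) * g n"
      using g0 by (cases n) (simp_all add: G_def k mult.assoc)
    have "fps_nth (fps_const (s*u*v) * fps_X^2 + fps_const (s*(u+v)) * fps_X * G + fps_const s * G^2) k
       = (if n = 0 then s*u*v else 0) + s * (u+v) * g n + s * (\<Sum>i\<in>{1..<n}. g i * g (n-i))"
      unfolding fps_add_nth x fps_mult_left_const_nth c by (simp add: k)
    also have "\<dots> = g (n+1)" using rec[of n] by (simp add: algebra_simps)
    finally show ?thesis by (simp add: G_def k)
  qed
qed


lemma sqrt_part:
  fixes s u v :: "'a::field_char_0" and G :: "'a fps"
  assumes s0: "s \<noteq> 0"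
    and Q: "G = fps_const (s*u*v) * fps_X^2 + fps_const (s*(u+v)) * fps_X * G + fps_const s * G^2"
    and G0: "fps_nth G 0 = 0"
  defines "B \<equiv> 1 - fps_const (s*(u+v)) * fps_X - fps_const (2*s) * G"
  defines "A \<equiv> 1 - fps_const (2*s*(u+v)) * fps_X + fps_const (s^2*(u-v)^2) * fps_X^2"
  shows "B^2 = A"
    and "G = fps_const (1/(2*s)) * (1 - fps_const (s*(u+v)) * fps_X - fps_radical (\<lambda>_ _. 1) 2 A)"
proof -
  define S where "S = fps_const s"
  define U where "U = fps_const u"
  define V where "V = fps_const v"
  have c: "fps_const (s*u*v) = S*U*V" "fps_const (s*(u+v)) = S*(U+V)" "fps_const (2*s) = 2*S"
     "fps_const (2*s*(u+v)) = 2*S*(U+V)" "fps_const (s^2*(u-v)^2) = S^2*(U-V)^2"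
    by (simp_all add: S_def U_def V_def fps_numeral_fps_const)
  have Q': "G = S*U*V * fps_X^2 + S*(U+V) * fps_X * G + S * G^2" using Q unfolding c S_def .
  have "B^2 - A = 4*S*(S*U*V * fps_X^2 + S*(U+V) * fps_X * G + S * G^2 - G)"
    unfolding B_def A_def c by algebra
  also have "\<dots> = 0" by (metis Q' right_minus_eq mult_zero_right)
  finally show BA: "B^2 = A" by simp
  have A0: "fps_nth A 0 = 1" by (simp add: A_def)
  have B0: "fps_nth B 0 = 1" using G0 by (simp add: B_def)
  have "B ^ Suc 1 = A \<longleftrightarrow> B = fps_radical (\<lambda>_ _. 1) (Suc 1) A"
    by (rule radical_unique) (simp_all add: A0 B0)
  from this[unfolded Suc_1] BA have R: "B = fps_radical (\<lambda>_ _. 1) 2 A" by simp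
  have "fps_const (2*s) * G = 1 - fps_const (s*(u+v)) * fps_X - B" by (simp add: B_def)
  then have "fps_const (1/(2*s)) * (fps_const (2*s) * G) = fps_const (1/(2*s)) * (1 - fps_const (s*(u+v)) * fps_X - B)"
    by simp
  moreover have "fps_const (1/(2*s)) * (fps_const (2*s) * G) = G"
    using s0 by (simp add: mult.assoc[symmetric])
  ultimately show "G = fps_const (1/(2*s)) * (1 - fps_const (s*(u+v)) * fps_X - fps_radical (\<lambda>_ _. 1) 2 A)"
    using R by simp
qed


lemma nth_mult_cX: fixes f :: "'a::field_char_0 fps" shows "fps_nth (f * (fps_const c * fps_X)) n = c * (if n = 0 then 0 else fps_nth f (n-1))"
proof -
  have "f * (fps_const c * fps_X) = fps_const c * (fps_X * f)" by (simp add: ac_simps)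
  then show ?thesis by (simp only: fps_mult_left_const_nth fps_X_mult_nth)
qed

lemma nth_mult_cX2: fixes f :: "'a::field_char_0 fps" shows "fps_nth (f * (fps_const c * fps_X^2)) n = c * (if n < 2 then 0 else fps_nth f (n-2))"
  by (simp add: mult.left_commute[of f] fps_X_power_mult_right_nth)

lemma ode_coeff:
  fixes B :: "'a::field_char_0 fps"
  assumes BA: "B^2 = 1 - fps_const c1 * fps_X + fps_const c2 * fps_X^2"
  shows "2 * of_nat (m+3) * fps_nth B (m+3) = c1 * of_nat (2*m+3) * fps_nth B (m+2) - 2 * c2 * of_nat m * fps_nth B (m+1)"
proof -
  define A where "A = 1 - fps_const c1 * fps_X + fps_const c2 * fps_X^2"
  have d: "fps_const 2 * fps_deriv B * B = fps_deriv A"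
    using fps_deriv_power[of B 2] BA by (simp add: A_def)
  have e: "fps_const 2 * fps_deriv B * A = fps_deriv A * B"
  proof -
    have "fps_const 2 * fps_deriv B * B * B = fps_deriv A * B" using d by simp
    then have "fps_const 2 * fps_deriv B * (B * B) = fps_deriv A * B" by (simp only: mult.assoc)
    moreover have "B * B = A" using BA by (simp add: A_def power2_eq_square)
    ultimately show ?thesis by simp
  qed
  have dA: "fps_deriv A = fps_const (-c1) + fps_const (2*c2) * fps_X"
    by (rule fps_ext) (simp add: A_def)
  have l: "fps_nth (fps_deriv B * A) (m+2) = of_nat (m+3) * fps_nth B (m+3) - c1 * (of_nat (m+2) * fps_nth B (m+2))
        + c2 * (of_nat (m+1) * fps_nth B (m+1))"
    unfolding A_def right_diff_distrib distrib_left fps_add_nth fps_sub_nth nth_mult_cX nth_mult_cX2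
    by (simp add: add_ac numeral_3_eq_3 numeral_2_eq_2)
  have r: "fps_nth (fps_deriv A * B) (m+2) = - c1 * fps_nth B (m+2) + 2 * c2 * fps_nth B (m+1)"
    unfolding dA distrib_right fps_add_nth by (simp add: mult.assoc)
  have "fps_nth (fps_const 2 * fps_deriv B * A) (m+2) = fps_nth (fps_deriv A * B) (m+2)" using e by simp
  then have "2 * (of_nat (m+3) * fps_nth B (m+3) - c1 * (of_nat (m+2) * fps_nth B (m+2))
        + c2 * (of_nat (m+1) * fps_nth B (m+1))) = - c1 * fps_nth B (m+2) + 2 * c2 * fps_nth B (m+1)"
    unfolding r mult.assoc fps_mult_left_const_nth l .
  then show ?thesis by (simp add: algebra_simps)
qed


lemma G_lin:
  fixes s u v :: "'a::field_char_0" and G :: "'a fps"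
  assumes s0: "s \<noteq> 0"
    and BA: "(1 - fps_const (s*(u+v)) * fps_X - fps_const (2*s) * G)^2
             = 1 - fps_const (2*s*(u+v)) * fps_X + fps_const (s^2*(u-v)^2) * fps_X^2"
  shows "of_nat (m+3) * fps_nth G (m+3) = of_nat (2*m+3) * (s*(u+v)) * fps_nth G (m+2)
            - of_nat m * (s^2*(u-v)^2) * fps_nth G (m+1)"
proof -
  define B where "B = 1 - fps_const (s*(u+v)) * fps_X - fps_const (2*s) * G"
  have o: "2 * of_nat (m+3) * fps_nth B (m+3) = (2*s*(u+v)) * of_nat (2*m+3) * fps_nth B (m+2)
      - 2 * (s^2*(u-v)^2) * of_nat m * fps_nth B (m+1)"
    by (rule ode_coeff) (use BA in \<open>simp add: B_def\<close>)
  have b3: "fps_nth B (m+3) = - 2 * s * fps_nth G (m+3)" by (simp add: B_def mult.assoc)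
  have b2: "fps_nth B (m+2) = - 2 * s * fps_nth G (m+2)" by (simp add: B_def mult.assoc)
  have b1: "2 * (s^2*(u-v)^2) * of_nat m * fps_nth B (m+1) = 2 * (s^2*(u-v)^2) * (of_nat m * (- 2 * s * fps_nth G (m+1)))"
    by (cases m) (simp_all add: B_def mult.assoc)
  have "2 * of_nat (m+3) * (- 2 * s * fps_nth G (m+3)) = (2*s*(u+v)) * of_nat (2*m+3) * (- 2 * s * fps_nth G (m+2))
      - 2 * (s^2*(u-v)^2) * (of_nat m * (- 2 * s * fps_nth G (m+1)))"
    using o unfolding b3 b2 b1 .
  then have "(-4 * s) * (of_nat (m+3) * fps_nth G (m+3)) = (-4 * s) * (of_nat (2*m+3) * (s*(u+v)) * fps_nth G (m+2)
            - of_nat m * (s^2*(u-v)^2) * fps_nth G (m+1))"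
    by (simp add: algebra_simps)
  then show ?thesis using s0 by simp
qed

lemma PP_0: "PP u v 0 = 0" by (simp add: PP_def cu_def nc_def)

lemma PP_explicit:
  assumes n1: "n \<ge> 1"
  shows "PP u v n = (\<Sum>k=1..n. (1 / of_nat n) * of_nat ((n choose k) * (n choose (k - 1))) * u ^ (n + 1 - k) * v ^ k)"
proof -
  have "PP u v n = (\<Sum>k\<in>{1..n}. cu u n k * v ^ k)"
    unfolding PP_def by (rule sum.mono_neutral_right) (auto simp: cu_big not_le Suc_le_eq)
  also have "\<dots> = (\<Sum>k=1..n. (1 / of_nat n) * of_nat ((n choose k) * (n choose (k - 1))) * u ^ (n + 1 - k) * v ^ k)"
    by (rule sum.cong) (auto simp: cu_def nc_def)
  finally show ?thesis .
qed


lemma E_rec: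
  fixes s u v :: "'a::field_char_0"
  shows "of_nat (m+3) * (s^(m+2) * PP u v (m+2)) = of_nat (2*m+3) * (s*(u+v)) * (s^(m+1) * PP u v (m+1))
     - of_nat m * (s^2*(u-v)^2) * (s^m * PP u v m)"
proof -
  have p: "of_nat (m+3) * PP u v (m+2) = of_nat (2*m+3) * (u + v) * PP u v (m+1) - of_nat m * (u - v)^2 * PP u v m"
    using P_rec[of "m+2" u v] by (simp add: add_ac)
  have "s^(m+2) * (of_nat (m+3) * PP u v (m+2)) = s^(m+2) * (of_nat (2*m+3) * (u + v) * PP u v (m+1) - of_nat m * (u - v)^2 * PP u v m)"
    unfolding p ..
  moreover have "s^(m+2) = s * s^(m+1)" by simp
  moreover have "s^(m+2) = s^2 * s^m" by (metis power_add mult.commute add.commute)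
  ultimately show ?thesis by (simp add: algebra_simps power2_eq_square)
qed

lemma E_nth:
  fixes s u v :: "'a::field_char_0"
  defines "E \<equiv> Abs_fps (\<lambda>m. if m < 2 then 0 else
            s ^ (m - 1) * (\<Sum>k=1..m-1. (1 / of_nat (m - 1))
               * of_nat (((m - 1) choose k) * ((m - 1) choose (k - 1)))
               * u ^ (m - k) * v ^ k))"
  shows "fps_nth E (n+1) = s ^ n * PP u v n"
proof (cases "n = 0")
  case True then show ?thesis by (simp add: E_def PP_0)
next
  case False
  then have "PP u v n = (\<Sum>k=1..n. (1 / of_nat n) * of_nat ((n choose k) * (n choose (k - 1))) * u ^ (n + 1 - k) * v ^ k)"
    by (intro PP_explicit) simp
  then show ?thesis using False by (simp add: E_def)
qed

lemma nar_dvd: "1 \<le> k \<Longrightarrow> n dvd (n choose k) * (n choose (k - 1))"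
proof (cases "1 \<le> k \<and> k \<le> n")
  case True
  then obtain j where k: "k = Suc j" by (cases k) auto
  have e1: "n * ((n - 1) choose k) = (n - k) * (n choose k)" by (rule absorb1)
  have e2: "n * ((n - 1) choose j) = Suc (n - k) * (n choose j)"
  proof -
    have "n - j = Suc (n - k)" using True k by simp
    then show ?thesis using absorb1[of n j] by simp
  qed
  have "n * ((n choose k) * ((n - 1) choose j)) = (n choose k) * (n * ((n - 1) choose j))" by simp
  also have "\<dots> = (n - k) * (n choose k) * (n choose j) + (n choose k) * (n choose j)"
    unfolding e2 by (simp add: algebra_simps)
  also have "\<dots> = n * ((n - 1) choose k) * (n choose j) + (n choose k) * (n choose j)"
    unfolding e1[symmetric] ..
  finally have "n dvd n * ((n - 1) choose k) * (n choose j) + (n choose k) * (n choose j)"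
    by (metis dvd_triv_left)
  then have "n dvd (n choose k) * (n choose j)"
    by (simp add: dvd_add_right_iff mult.assoc)
  then show ?thesis using k by simp
next
  case False
  assume "1 \<le> k"
  with False have "n < k" by linarith
  then show ?thesis by (simp add: binomial_eq_0)
qed


lemma nar_part:
  fixes s u v :: "'a::field_char_0"
  assumes u0: "u \<noteq> 0" and n1: "n \<ge> 1"
  shows "s ^ n * PP u v n = s ^ n * u ^ (n + 1) * narayana_poly n (v / u)"
proof -
  have "PP u v n = u ^ (n + 1) * narayana_poly n (v / u)"
    unfolding PP_explicit[OF n1] narayana_poly_def sum_distrib_left
  proof (rule sum.cong[OF refl])
    fix k assume k: "k \<in> {1..n}"
    have dv: "n dvd (n choose k) * (n choose (k - 1))" using k by (intro nar_dvd) simp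
    have N: "(of_nat (narayana n k) :: 'a) = of_nat ((n choose k) * (n choose (k - 1))) / of_nat n"
    proof -
      obtain q where q: "(n choose k) * (n choose (k - 1)) = n * q" using dv by (auto elim!: dvdE)
      have "n > 0" using k by simp
      then show ?thesis unfolding narayana_def q by simp
    qed
    have U: "u ^ (n + 1) = u ^ (n + 1 - k) * u ^ k" using k by (simp add: power_add[symmetric])
    show "1 / of_nat n * of_nat ((n choose k) * (n choose (k - 1))) * u ^ (n + 1 - k) * v ^ k =
          u ^ (n + 1) * (of_nat (narayana n k) * (v / u) ^ k)"
      unfolding N U using u0 by (simp add: power_divide field_simps)
  qed
  then show ?thesis by simp
qed

theorem mainTheorem1:
  fixes s u v :: "'a::field_char_0" and F0 :: "'a pseries"
  assumes "s \<noteq> 0"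
    and "dessin_genus0 s u v F0"
  shows "G01 F0 = fps_const (s * u * v) * fps_X ^ 2
                  + fps_const (s * (u + v)) * fps_X * G01 F0
                  + fps_const s * (G01 F0) ^ 2
       \<and> G01 F0 = fps_const (1 / (2 * s)) *
            (1 - fps_const (s * (u + v)) * fps_X
               - fps_radical (\<lambda>_ _. 1) 2
                   (1 - fps_const (2 * s * (u + v)) * fps_X
                      + fps_const (s ^ 2 * (u - v) ^ 2) * fps_X ^ 2))
       \<and> G01 F0 = Abs_fps (\<lambda>m. if m < 2 then 0 else
            s ^ (m - 1) * (\<Sum>k=1..m-1. (1 / of_nat (m - 1))
               * of_nat (((m - 1) choose k) * ((m - 1) choose (k - 1)))
               * u ^ (m - k) * v ^ k))
       \<and> (u \<noteq> 0 \<longrightarrow> (\<forall>n\<ge>1. fps_nth (G01 F0) (n + 1) = s ^ n * u ^ (n + 1) * narayana_poly n (v / u)))"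
proof -
  define g :: "nat \<Rightarrow> 'a" where "g n = of_nat n * F0 {#n#}" for n
  have g0: "g 0 = 0" by (simp add: g_def)
  have rec: "\<And>n. g (n+1) = s * ((u+v) * g n + (\<Sum>i\<in>{1..<n}. g i * g (n-i)) + (if n = 0 then u * v else 0))"
    unfolding g_def by (rule vir_empty[OF assms])
  have Gd: "G01 F0 = Abs_fps (\<lambda>k. if k < 2 then 0 else g (k-1))"
    by (rule fps_ext) (simp add: G01_def pdiff_def g_def)
  have Q: "G01 F0 = fps_const (s*u*v) * fps_X^2 + fps_const (s*(u+v)) * fps_X * G01 F0 + fps_const s * (G01 F0)^2"
    unfolding Gd by (rule quad_fps[OF g0 rec])
  have G0: "fps_nth (G01 F0) 0 = 0" by (simp add: Gd)
  note sq = sqrt_part[OF assms(1) Q G0]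
  define E where "E = Abs_fps (\<lambda>m. if m < 2 then 0 else
            s ^ (m - 1) * (\<Sum>k=1..m-1. (1 / of_nat (m - 1))
               * of_nat (((m - 1) choose k) * ((m - 1) choose (k - 1)))
               * u ^ (m - k) * v ^ k))"
  have En: "fps_nth E (n+1) = s ^ n * PP u v n" for n
    unfolding E_def by (rule E_nth)
  have GE: "G01 F0 = E"
  proof (rule fps_ext)
    fix j show "fps_nth (G01 F0) j = fps_nth E j"
    proof (induction j rule: less_induct)
      case (less j)
      consider "j = 0" | "j = 1" | "j = 2" | m where "j = m + 3"
        by (metis One_nat_def Suc_1 add.commute add_Suc_right less_2_cases linorder_not_less
             numeral_3_eq_3 le_Suc_ex Suc_le_eq not_less_eq)
      then show ?case
      proof cases
        case 1 then show ?thesis by (simp add: Gd E_def)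
      next
        case 2 then show ?thesis by (simp add: Gd E_def)
      next
        case 3
        have "g 1 = s * u * v" using rec[of 0] g0 by simp
        then show ?thesis using 3 by (simp add: Gd E_def)
      next
        case 4
        have gl: "of_nat (m+3) * fps_nth (G01 F0) (m+3) = of_nat (2*m+3) * (s*(u+v)) * fps_nth (G01 F0) (m+2)
            - of_nat m * (s^2*(u-v)^2) * fps_nth (G01 F0) (m+1)"
          by (rule G_lin[OF assms(1) sq(1)])
        have el: "of_nat (m+3) * fps_nth E (m+3) = of_nat (2*m+3) * (s*(u+v)) * fps_nth E (m+2)
            - of_nat m * (s^2*(u-v)^2) * fps_nth E (m+1)"
        proof -
          have a1: "m + 2 + 1 = m + 3" "m + 1 + 1 = m + 2" by simp_all
          show ?thesis using E_rec[of m s u v] unfolding En[of "m+2", unfolded a1(1)] En[of "m+1", unfolded a1(2)] En[of m] .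
        qed
        have ih: "fps_nth (G01 F0) (m+2) = fps_nth E (m+2)" "fps_nth (G01 F0) (m+1) = fps_nth E (m+1)"
          using less 4 by auto
        have "of_nat (m+3) * fps_nth (G01 F0) (m+3) = of_nat (m+3) * fps_nth E (m+3)"
          unfolding gl el ih ..
        moreover have "(of_nat (m+3) :: 'a) \<noteq> 0" by (simp only: of_nat_eq_0_iff)
        ultimately show ?thesis using 4 by simp
      qed
    qed
  qed
  have P4: "u \<noteq> 0 \<longrightarrow> (\<forall>n\<ge>1. fps_nth (G01 F0) (n + 1) = s ^ n * u ^ (n + 1) * narayana_poly n (v / u))"
    using nar_part[of u] En unfolding GE by simp
  show ?thesis using Q sq(2) GE P4 unfolding E_def by blast
qed

end
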